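(* A bitopological space $(X,\tau[tt],\tau[ff])$ is $\mathbb{B}$-sober if and only if for every pair $(K_{tt},K_{ff})$, where $K_{tt}$ is an irreducible closed subset of $(X,\tau[tt])$ and $K_{ff}$ is an irreducible closed subset of $(X,\tau[ff])$, there is a unique point $x\in X$ such that $K_{tt}$ is the closure of $\{x\}$ in $(X,\tau[tt])$ and $K_{ff}$ is the closure of $\{x\}$ in $(X,\tau[ff])$.
   Context: $\mathbb{B}=\{0,1,tt,ff\}$ is the four-element Boolean algebra with bottom $0$, top $1$, and $tt,ff$ incomparable complements. A bitopological space $(X,\tau[tt],\tau[ff])$ is identified with the $\mathbb{B}$-topology $\tau=\{\lambda\colon X\to\mathbb{B}: \lambda[tt]\in\tau[tt],\ \lambda[ff]\in\tau[ff]\}$, where $\lambda[b]=\{x:\lambda(x)\ge b\}$. For $b\in\mathbb{B}$, $b_X$ is the constant map with value $b$. A $\mathbb{B}$-point of $\tau$ is a frame homomorphism $p\colon\tau\to\mathbb{B}$ (preserving finite meets and arbitrary joins) with $p(b_X)=b$ for all $b\in\mathbb{B}$. The space is $\mathbb{B}$-sober if for every $\mathbb{B}$-point $p$ of $\tau$ there is a unique $x\in X$ with $p(\lambda)=\lambda(x)$ for all $\lambda\in\tau$. An irreducible closed subset of a topological space is a nonempty closed set not contained in the union of two closed sets unless contained in one of them. *)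

theory Defs
  imports "HOL-Analysis.Analysis" "HOL-Library.Product_Order"
begin

text \<open>The four-element Boolean algebra B = {0,1,tt,ff} is represented as bool \<times> bool
  with the componentwise (product) order: 0 = bot = (False,False), 1 = top = (True,True),
  tt = (True,False), ff = (False,True).\<close>

type_synonym B4 = "bool \<times> bool"

definition Btt :: B4 where "Btt = (True, False)"
definition Bff :: B4 where "Bff = (False, True)"

definition Bcut :: "'a set \<Rightarrow> ('a \<Rightarrow> B4) \<Rightarrow> B4 \<Rightarrow> 'a set" where
  "Bcut X l b = {x \<in> X. b \<le> l x}"

definition Bconst :: "'a set \<Rightarrow> B4 \<Rightarrow> 'a \<Rightarrow> B4" where
  "Bconst X b = (\<lambda>x. if x \<in> X then b else bot)"

text \<open>The B-topology of the bitopological space (X, T1, T2), X = topspace T1 = topspace T2.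
  Maps X -> B are represented as functions that are bot outside X.\<close>
definition Btopology :: "'a topology \<Rightarrow> 'a topology \<Rightarrow> ('a \<Rightarrow> B4) set" where
  "Btopology T1 T2 = {l. (\<forall>x. x \<notin> topspace T1 \<longrightarrow> l x = bot)
      \<and> openin T1 (Bcut (topspace T1) l Btt) \<and> openin T2 (Bcut (topspace T1) l Bff)}"

text \<open>B-point: frame homomorphism tau -> B (finite meets, arbitrary joins, computed
  pointwise in tau) with p(b_X) = b for all b.\<close>
definition Bpoint :: "'a topology \<Rightarrow> 'a topology \<Rightarrow> (('a \<Rightarrow> B4) \<Rightarrow> B4) \<Rightarrow> bool" where
  "Bpoint T1 T2 p \<longleftrightarrow>
     (\<forall>l \<in> Btopology T1 T2. \<forall>m \<in> Btopology T1 T2. p (inf l m) = inf (p l) (p m))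
   \<and> (\<forall>S. S \<subseteq> Btopology T1 T2 \<longrightarrow> p (Sup S) = Sup (p ` S))
   \<and> (\<forall>b. p (Bconst (topspace T1) b) = b)"

definition B_sober :: "'a topology \<Rightarrow> 'a topology \<Rightarrow> bool" where
  "B_sober T1 T2 \<longleftrightarrow>
     (\<forall>p. Bpoint T1 T2 p \<longrightarrow>
        (\<exists>!x. x \<in> topspace T1 \<and> (\<forall>l \<in> Btopology T1 T2. p l = l x)))"

definition irreducible_closed :: "'a topology \<Rightarrow> 'a set \<Rightarrow> bool" where
  "irreducible_closed T K \<longleftrightarrow> closedin T K \<and> K \<noteq> {} \<and>
     (\<forall>A B. closedin T A \<and> closedin T B \<and> K \<subseteq> A \<union> B \<longrightarrow> K \<subseteq> A \<or> K \<subseteq> B)"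

end

theory Submission
  imports Defs
begin

lemma tt_le: "(Btt \<le> (a::B4)) = fst a" by (auto simp: Btt_def less_eq_prod_def)
lemma ff_le: "(Bff \<le> (a::B4)) = snd a" by (auto simp: Bff_def less_eq_prod_def)

lemma closure_pt: "x \<in> topspace T \<Longrightarrow>
  T closure_of {x} = {z\<in>topspace T. \<forall>U. openin T U \<and> z\<in>U \<longrightarrow> x\<in>U}"
  by (auto simp: closure_of_def)

lemma open_meet_closure:
  assumes "openin T U" "x \<in> topspace T"
  shows "(U \<inter> T closure_of {x} \<noteq> {}) \<longleftrightarrow> x \<in> U"
proof
  assume "U \<inter> T closure_of {x} \<noteq> {}"
  then obtain z where "z \<in> U" "z \<in> T closure_of {x}" by blast
  then show "x \<in> U" using assms closure_pt[OF assms(2)] by auto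
next
  assume "x \<in> U" then show "U \<inter> T closure_of {x} \<noteq> {}"
    using assms closure_of_subset[of "{x}" T] by auto
qed

lemma char_closure:
  assumes "closedin T K" "x \<in> topspace T"
    "\<forall>U. openin T U \<longrightarrow> (U \<inter> K \<noteq> {} \<longleftrightarrow> x \<in> U)"
  shows "K = T closure_of {x}"
proof
  show "K \<subseteq> T closure_of {x}"
  proof
    fix z assume z: "z \<in> K"
    have "z \<in> topspace T" using z assms(1) closedin_subset by blast
    moreover have "\<forall>U. openin T U \<and> z\<in>U \<longrightarrow> x\<in>U" using z assms(3) by blast
    ultimately show "z \<in> T closure_of {x}" using closure_pt[OF assms(2)] by blast
  qed
next
  show "T closure_of {x} \<subseteq> K"
  proof
    fix z assume z: "z \<in> T closure_of {x}"
    show "z \<in> K"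
    proof (rule ccontr)
      assume "z \<notin> K"
      have o: "openin T (topspace T - K)" using assms(1) by blast
      have "z \<in> topspace T" by (meson closure_of_subset_topspace subsetD z)
      with \<open>z \<notin> K\<close> have "x \<in> topspace T - K" using z o closure_pt[OF assms(2)] by blast
      hence "(topspace T - K) \<inter> K \<noteq> {}" using assms(3) o by blast
      then show False by blast
    qed
  qed
qed

lemma irr_meet:
  assumes "irreducible_closed T K" "openin T U" "openin T V"
  shows "(U \<inter> V \<inter> K \<noteq> {}) \<longleftrightarrow> (U \<inter> K \<noteq> {} \<and> V \<inter> K \<noteq> {})"
proof
  assume "U \<inter> V \<inter> K \<noteq> {}" then show "U \<inter> K \<noteq> {} \<and> V \<inter> K \<noteq> {}" by blast
next
  assume h: "U \<inter> K \<noteq> {} \<and> V \<inter> K \<noteq> {}"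
  show "U \<inter> V \<inter> K \<noteq> {}"
  proof
    assume e: "U \<inter> V \<inter> K = {}"
    have K: "closedin T K" "K \<noteq> {}"
      and irr: "\<And>A B. closedin T A \<Longrightarrow> closedin T B \<Longrightarrow> K \<subseteq> A \<union> B \<Longrightarrow> K \<subseteq> A \<or> K \<subseteq> B"
      using assms(1) unfolding irreducible_closed_def by blast+
    have "K \<subseteq> topspace T" using K closedin_subset by blast
    hence "K \<subseteq> (topspace T - U) \<union> (topspace T - V)" using e by blast
    moreover have "closedin T (topspace T - U)" "closedin T (topspace T - V)"
      using assms by blast+
    ultimately have "K \<subseteq> topspace T - U \<or> K \<subseteq> topspace T - V" using irr by blast
    then show False using h by blast
  qed
qed

lemma point_irr:
  assumes top: "q (topspace T)"
    and meet: "\<And>U V. openin T U \<Longrightarrow> openin T V \<Longrightarrow> q (U \<inter> V) = (q U \<and> q V)"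
    and join: "\<And>F. (\<forall>U\<in>F. openin T U) \<Longrightarrow> q (\<Union>F) = (\<exists>U\<in>F. q U)"
  defines "W \<equiv> \<Union>{U. openin T U \<and> \<not> q U}"
  shows "irreducible_closed T (topspace T - W)"
    "\<forall>U. openin T U \<longrightarrow> (q U \<longleftrightarrow> U \<inter> (topspace T - W) \<noteq> {})"
proof -
  have Wo: "openin T W" unfolding W_def by (rule openin_Union) auto
  have qW: "\<not> q W" unfolding W_def by (subst join) auto
  have mono: "\<And>U V. openin T U \<Longrightarrow> openin T V \<Longrightarrow> U \<subseteq> V \<Longrightarrow> q U \<Longrightarrow> q V"
  proof -
    fix U V assume "openin T U" "openin T V" "U \<subseteq> V" "q U"
    then show "q V" using meet[of U V] by (simp add: Int_absorb2)
  qed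
  have key: "\<forall>U. openin T U \<longrightarrow> (q U \<longleftrightarrow> U \<inter> (topspace T - W) \<noteq> {})"
  proof (intro allI impI)
    fix U assume U: "openin T U"
    have Us: "U \<subseteq> topspace T" using U openin_subset by blast
    show "q U \<longleftrightarrow> U \<inter> (topspace T - W) \<noteq> {}"
    proof
      assume "q U" show "U \<inter> (topspace T - W) \<noteq> {}"
      proof
        assume "U \<inter> (topspace T - W) = {}"
        hence "U \<subseteq> W" using Us by blast
        then show False using mono[OF U Wo] \<open>q U\<close> qW by blast
      qed
    next
      assume "U \<inter> (topspace T - W) \<noteq> {}"
      then show "q U" using U unfolding W_def by blast
    qed
  qed
  show "\<forall>U. openin T U \<longrightarrow> (q U \<longleftrightarrow> U \<inter> (topspace T - W) \<noteq> {})" by (rule key)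
  show "irreducible_closed T (topspace T - W)"
    unfolding irreducible_closed_def
  proof (intro conjI allI impI)
    show "closedin T (topspace T - W)" using Wo by blast
    show "topspace T - W \<noteq> {}" using key top by auto
  next
    fix A B assume h: "closedin T A \<and> closedin T B \<and> topspace T - W \<subseteq> A \<union> B"
    have oA: "openin T (topspace T - A)" and oB: "openin T (topspace T - B)" using h by blast+
    show "topspace T - W \<subseteq> A \<or> topspace T - W \<subseteq> B"
    proof (rule ccontr)
      assume "\<not> ?thesis"
      hence "q (topspace T - A)" "q (topspace T - B)" using key oA oB by blast+
      hence "q ((topspace T - A) \<inter> (topspace T - B))" using meet[OF oA oB] by blast
      hence "(topspace T - A) \<inter> (topspace T - B) \<inter> (topspace T - W) \<noteq> {}"
        using key oA oB by blast
      then show False using h by blast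
    qed
  qed
qed

lemma auxf: "(z::B4) = inf z (False,True) \<Longrightarrow> \<not> fst z" by (cases z) simp
lemma auxs: "(z::B4) = inf z (True,False) \<Longrightarrow> \<not> snd z" by (cases z) simp

definition mk :: "'a set \<Rightarrow> 'a set \<Rightarrow> 'a \<Rightarrow> B4" where
  "mk U V = (\<lambda>x. (x \<in> U, x \<in> V))"

lemma cut_mk_tt: "U \<subseteq> X \<Longrightarrow> Bcut X (mk U V) Btt = U"
  by (auto simp: Bcut_def mk_def tt_le)
lemma cut_mk_ff: "V \<subseteq> X \<Longrightarrow> Bcut X (mk U V) Bff = V"
  by (auto simp: Bcut_def mk_def ff_le)

lemma mk_in:
  assumes "topspace T1 = topspace T2" "openin T1 U" "openin T2 V"
  shows "mk U V \<in> Btopology T1 T2"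
proof -
  have "U \<subseteq> topspace T1" "V \<subseteq> topspace T1" using assms openin_subset by metis+
  then have h: "Bcut (topspace T1) (mk U V) Btt = U" "Bcut (topspace T1) (mk U V) Bff = V"
    by (auto simp: cut_mk_tt cut_mk_ff)
  have "\<forall>x. x \<notin> topspace T1 \<longrightarrow> mk U V x = bot"
    using \<open>U \<subseteq> topspace T1\<close> \<open>V \<subseteq> topspace T1\<close> by (auto simp: mk_def bot_prod_def)
  then show ?thesis unfolding Btopology_def mem_Collect_eq h using assms(2,3) by simp
qed

lemma l_eq:
  assumes "l \<in> Btopology T1 T2"
  shows "l = mk (Bcut (topspace T1) l Btt) (Bcut (topspace T1) l Bff)"
proof
  fix x
  show "l x = mk (Bcut (topspace T1) l Btt) (Bcut (topspace T1) l Bff) x"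
  proof (cases "x \<in> topspace T1")
    case True then show ?thesis by (auto simp: mk_def Bcut_def tt_le ff_le prod_eq_iff)
  next
    case False then show ?thesis using assms
      by (auto simp: mk_def Bcut_def Btopology_def bot_prod_def)
  qed
qed

lemma cuts_open:
  assumes "l \<in> Btopology T1 T2"
  shows "openin T1 (Bcut (topspace T1) l Btt)" "openin T2 (Bcut (topspace T1) l Bff)"
  using assms unfolding Btopology_def by auto

theorem mainTheorem7:
  fixes T1 T2 :: "'a topology"
  assumes "topspace T1 = topspace T2"
  shows "B_sober T1 T2 \<longleftrightarrow>
    (\<forall>Ktt Kff. irreducible_closed T1 Ktt \<and> irreducible_closed T2 Kff \<longrightarrow>
       (\<exists>!x. x \<in> topspace T1 \<and> Ktt = T1 closure_of {x} \<and> Kff = T2 closure_of {x}))"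
proof
  define X where "X = topspace T1"
  have X2: "topspace T2 = X" using assms X_def by simp
  assume S: "B_sober T1 T2"
  show "\<forall>Ktt Kff. irreducible_closed T1 Ktt \<and> irreducible_closed T2 Kff \<longrightarrow>
       (\<exists>!x. x \<in> topspace T1 \<and> Ktt = T1 closure_of {x} \<and> Kff = T2 closure_of {x})"
  proof (intro allI impI)
    fix K1 K2 assume K: "irreducible_closed T1 K1 \<and> irreducible_closed T2 K2"
    have K1: "irreducible_closed T1 K1" and K2: "irreducible_closed T2 K2" using K by auto
    have K1X: "K1 \<subseteq> X" "K1 \<noteq> {}" using K1 closedin_subset unfolding irreducible_closed_def X_def by auto
    have K2X: "K2 \<subseteq> X" "K2 \<noteq> {}" using K2 closedin_subset X2 unfolding irreducible_closed_def by auto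
    define p where "p = (\<lambda>l. (Bcut X l Btt \<inter> K1 \<noteq> {}, Bcut X l Bff \<inter> K2 \<noteq> {}))"
    have cinf_tt: "\<And>l m. Bcut X (inf l m) Btt = Bcut X l Btt \<inter> Bcut X m Btt"
      by (auto simp: Bcut_def tt_le)
    have cinf_ff: "\<And>l m. Bcut X (inf l m) Bff = Bcut X l Bff \<inter> Bcut X m Bff"
      by (auto simp: Bcut_def ff_le)
    have csup_tt: "\<And>S. Bcut X (Sup S) Btt = (\<Union>l\<in>S. Bcut X l Btt)"
      by (auto simp: Bcut_def tt_le fst_Sup)
    have csup_ff: "\<And>S. Bcut X (Sup S) Bff = (\<Union>l\<in>S. Bcut X l Bff)"
      by (auto simp: Bcut_def ff_le snd_Sup)
    have P: "Bpoint T1 T2 p"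
      unfolding Bpoint_def
    proof (intro conjI ballI allI impI)
      fix l m assume l: "l \<in> Btopology T1 T2" and m: "m \<in> Btopology T1 T2"
      have o: "openin T1 (Bcut X l Btt)" "openin T1 (Bcut X m Btt)"
              "openin T2 (Bcut X l Bff)" "openin T2 (Bcut X m Bff)"
        using cuts_open[OF l] cuts_open[OF m] X_def by auto
      show "p (inf l m) = inf (p l) (p m)"
        unfolding p_def cinf_tt cinf_ff
        using irr_meet[OF K1 o(1,2)] irr_meet[OF K2 o(3,4)] by (simp add: Int_assoc)
    next
      fix S :: "('a \<Rightarrow> B4) set" assume "S \<subseteq> Btopology T1 T2"
      show "p (Sup S) = Sup (p ` S)"
        unfolding p_def csup_tt csup_ff by (auto simp: prod_eq_iff fst_Sup snd_Sup)
    next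
      fix b :: B4
      have "Bcut X (Bconst X b) Btt = (if fst b then X else {})"
        by (auto simp: Bcut_def Bconst_def tt_le)
      moreover have "Bcut X (Bconst X b) Bff = (if snd b then X else {})"
        by (auto simp: Bcut_def Bconst_def ff_le)
      ultimately show "p (Bconst (topspace T1) b) = b"
        unfolding p_def X_def[symmetric] using K1X K2X by (auto simp: prod_eq_iff)
    qed
    then obtain x where x: "x \<in> X" "\<forall>l\<in>Btopology T1 T2. p l = l x"
      and xu: "\<And>y. y \<in> X \<and> (\<forall>l\<in>Btopology T1 T2. p l = l y) \<Longrightarrow> y = x"
      using S unfolding B_sober_def X_def by metis
    have c1: "K1 = T1 closure_of {x}"
    proof (rule char_closure)
      show "closedin T1 K1" using K1 irreducible_closed_def by blast
      show "x \<in> topspace T1" using x X_def by simp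
      show "\<forall>U. openin T1 U \<longrightarrow> (U \<inter> K1 \<noteq> {}) = (x \<in> U)"
      proof (intro allI impI)
        fix U assume U: "openin T1 U"
        have Us: "U \<subseteq> X" using U openin_subset X_def by blast
        have "p (mk U {}) = mk U {} x" using x mk_in[OF assms U] by auto
        moreover have "Bcut X (mk U {}) Btt = U" using cut_mk_tt[OF Us] .
        ultimately show "(U \<inter> K1 \<noteq> {}) = (x \<in> U)"
          unfolding p_def by (simp add: mk_def)
      qed
    qed
    have c2: "K2 = T2 closure_of {x}"
    proof (rule char_closure)
      show "closedin T2 K2" using K2 irreducible_closed_def by blast
      show "x \<in> topspace T2" using x X2 by simp
      show "\<forall>U. openin T2 U \<longrightarrow> (U \<inter> K2 \<noteq> {}) = (x \<in> U)"
      proof (intro allI impI)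
        fix U assume U: "openin T2 U"
        have Us: "U \<subseteq> X" using U openin_subset X2 by blast
        have "p (mk {} U) = mk {} U x" using x mk_in[OF assms _ U] by auto
        moreover have "Bcut X (mk {} U) Bff = U" using cut_mk_ff[OF Us] .
        ultimately show "(U \<inter> K2 \<noteq> {}) = (x \<in> U)"
          unfolding p_def by (simp add: mk_def)
      qed
    qed
    show "\<exists>!x. x \<in> topspace T1 \<and> K1 = T1 closure_of {x} \<and> K2 = T2 closure_of {x}"
    proof (rule ex1I)
      show "x \<in> topspace T1 \<and> K1 = T1 closure_of {x} \<and> K2 = T2 closure_of {x}"
        using x c1 c2 X_def by simp
    next
      fix y assume y: "y \<in> topspace T1 \<and> K1 = T1 closure_of {y} \<and> K2 = T2 closure_of {y}"
      have "\<forall>l\<in>Btopology T1 T2. p l = l y"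
      proof
        fix l assume l: "l \<in> Btopology T1 T2"
        have o: "openin T1 (Bcut X l Btt)" "openin T2 (Bcut X l Bff)"
          using cuts_open[OF l] X_def by auto
        have "p l = (y \<in> Bcut X l Btt, y \<in> Bcut X l Bff)"
          unfolding p_def using y open_meet_closure[OF o(1), of y] open_meet_closure[OF o(2), of y]
            X2 X_def by auto
        also have "\<dots> = l y" using y X_def by (auto simp: Bcut_def tt_le ff_le prod_eq_iff)
        finally show "p l = l y" .
      qed
      then show "y = x" using xu y X_def by auto
    qed
  qed
next
  define X where "X = topspace T1"
  have X2: "topspace T2 = X" using assms X_def by simp
  assume H: "\<forall>Ktt Kff. irreducible_closed T1 Ktt \<and> irreducible_closed T2 Kff \<longrightarrow>
       (\<exists>!x. x \<in> topspace T1 \<and> Ktt = T1 closure_of {x} \<and> Kff = T2 closure_of {x})"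
  show "B_sober T1 T2" unfolding B_sober_def
  proof (intro allI impI)
    fix p assume P: "Bpoint T1 T2 p"
    have pinf: "\<And>l m. l \<in> Btopology T1 T2 \<Longrightarrow> m \<in> Btopology T1 T2 \<Longrightarrow> p (inf l m) = inf (p l) (p m)"
      and psup: "\<And>S. S \<subseteq> Btopology T1 T2 \<Longrightarrow> p (Sup S) = Sup (p ` S)"
      and pc: "\<And>b. p (Bconst X b) = b"
      using P unfolding Bpoint_def X_def by auto
    define q1 where "q1 = (\<lambda>U. fst (p (mk U {})))"
    define q2 where "q2 = (\<lambda>V. snd (p (mk {} V)))"
    have o0: "openin T1 {}" "openin T2 {}" by auto
    have mkinf: "\<And>U V U' V'. inf (mk U V) (mk U' V') = mk (U \<inter> U') (V \<inter> V')"
      by (auto simp: mk_def)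
    have mksup: "\<And>F G. Sup ((\<lambda>U. mk U {}) ` F) = mk (\<Union>F) {}"
      by (auto simp: mk_def fun_eq_iff prod_eq_iff fst_Sup snd_Sup)
    have mksup2: "\<And>F G. Sup ((\<lambda>U. mk {} U) ` F) = mk {} (\<Union>F)"
      by (auto simp: mk_def fun_eq_iff prod_eq_iff fst_Sup snd_Sup)
    have mkXt: "mk X {} = Bconst X Btt" by (auto simp: mk_def Bconst_def Btt_def bot_prod_def)
    have mkXf: "mk {} X = Bconst X Bff" by (auto simp: mk_def Bconst_def Bff_def bot_prod_def)
    have q1top: "q1 (topspace T1)" unfolding q1_def X_def[symmetric] mkXt pc by (simp add: Btt_def)
    have q2top: "q2 (topspace T2)" unfolding q2_def X2 mkXf pc by (simp add: Bff_def)
    have q1meet: "\<And>U V. openin T1 U \<Longrightarrow> openin T1 V \<Longrightarrow> q1 (U \<inter> V) = (q1 U \<and> q1 V)"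
    proof -
      fix U V assume U: "openin T1 U" and V: "openin T1 V"
      have "p (mk (U \<inter> V) {}) = inf (p (mk U {})) (p (mk V {}))"
        using pinf[OF mk_in[OF assms U o0(2)] mk_in[OF assms V o0(2)]] mkinf[of U "{}" V "{}"] by simp
      then show "q1 (U \<inter> V) = (q1 U \<and> q1 V)" by (simp add: q1_def)
    qed
    have q2meet: "\<And>U V. openin T2 U \<Longrightarrow> openin T2 V \<Longrightarrow> q2 (U \<inter> V) = (q2 U \<and> q2 V)"
    proof -
      fix U V assume U: "openin T2 U" and V: "openin T2 V"
      have "p (mk {} (U \<inter> V)) = inf (p (mk {} U)) (p (mk {} V))"
        using pinf[OF mk_in[OF assms o0(1) U] mk_in[OF assms o0(1) V]] mkinf[of "{}" U "{}" V] by simp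
      then show "q2 (U \<inter> V) = (q2 U \<and> q2 V)" by (simp add: q2_def)
    qed
    have q1join: "\<And>F. (\<forall>U\<in>F. openin T1 U) \<Longrightarrow> q1 (\<Union>F) = (\<exists>U\<in>F. q1 U)"
    proof -
      fix F assume F: "\<forall>U\<in>F. openin T1 U"
      have "(\<lambda>U. mk U {}) ` F \<subseteq> Btopology T1 T2" using F mk_in[OF assms _ o0(2)] by auto
      then have "p (mk (\<Union>F) {}) = Sup (p ` (\<lambda>U. mk U {}) ` F)" using psup mksup by metis
      then show "q1 (\<Union>F) = (\<exists>U\<in>F. q1 U)" unfolding q1_def by (simp add: fst_Sup)
    qed
    have q2join: "\<And>F. (\<forall>U\<in>F. openin T2 U) \<Longrightarrow> q2 (\<Union>F) = (\<exists>U\<in>F. q2 U)"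
    proof -
      fix F assume F: "\<forall>U\<in>F. openin T2 U"
      have "(\<lambda>U. mk {} U) ` F \<subseteq> Btopology T1 T2" using F mk_in[OF assms o0(1)] by auto
      then have "p (mk {} (\<Union>F)) = Sup (p ` (\<lambda>U. mk {} U) ` F)" using psup mksup2 by metis
      then show "q2 (\<Union>F) = (\<exists>U\<in>F. q2 U)" unfolding q2_def by (simp add: snd_Sup)
    qed
    have pmk: "\<And>U V. openin T1 U \<Longrightarrow> openin T2 V \<Longrightarrow> p (mk U V) = (q1 U, q2 V)"
    proof -
      fix U V assume U: "openin T1 U" and V: "openin T2 V"
      have Us: "U \<subseteq> X" and Vs: "V \<subseteq> X" using U V openin_subset X_def X2 by blast+
      have oX: "openin T1 X" "openin T2 X" using X_def X2 by (metis openin_topspace)+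
      have a: "mk U V = Sup {mk U {}, mk {} V}" by (auto simp: mk_def fun_eq_iff)
      have "p (mk U V) = Sup {p (mk U {}), p (mk {} V)}"
        unfolding a using psup[of "{mk U {}, mk {} V}"] mk_in[OF assms U o0(2)] mk_in[OF assms o0(1) V]
        by simp
      moreover have "p (mk {} V) = inf (p (mk {} V)) (p (mk {} X))"
        using pinf[OF mk_in[OF assms o0(1) V] mk_in[OF assms o0(1) oX(2)]] mkinf[of "{}" V "{}" X] Vs
        by (simp add: Int_absorb2)
      hence "\<not> fst (p (mk {} V))" unfolding mkXf pc Bff_def by (rule auxf)
      moreover have "p (mk U {}) = inf (p (mk U {})) (p (mk X {}))"
        using pinf[OF mk_in[OF assms U o0(2)] mk_in[OF assms oX(1) o0(2)]] mkinf[of U "{}" X "{}"] Us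
        by (simp add: Int_absorb2)
      hence "\<not> snd (p (mk U {}))" unfolding mkXt pc Btt_def by (rule auxs)
      ultimately show "p (mk U V) = (q1 U, q2 V)"
        unfolding q1_def q2_def by (auto simp: prod_eq_iff)
    qed
    define W1 where "W1 = \<Union>{U. openin T1 U \<and> \<not> q1 U}"
    define W2 where "W2 = \<Union>{U. openin T2 U \<and> \<not> q2 U}"
    note A1 = point_irr[of q1 T1, OF q1top q1meet q1join, folded W1_def]
    note A2 = point_irr[of q2 T2, OF q2top q2meet q2join, folded W2_def]
    obtain x where x: "x \<in> topspace T1" "topspace T1 - W1 = T1 closure_of {x}"
        "topspace T2 - W2 = T2 closure_of {x}"
      and xu: "\<And>y. y \<in> topspace T1 \<and> topspace T1 - W1 = T1 closure_of {y}
                 \<and> topspace T2 - W2 = T2 closure_of {y} \<Longrightarrow> y = x"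
      using H A1(1) A2(1) by metis
    show "\<exists>!x. x \<in> topspace T1 \<and> (\<forall>l\<in>Btopology T1 T2. p l = l x)"
    proof (rule ex1I)
      show "x \<in> topspace T1 \<and> (\<forall>l\<in>Btopology T1 T2. p l = l x)"
      proof (intro conjI ballI)
        show "x \<in> topspace T1" by (rule x(1))
        fix l assume l: "l \<in> Btopology T1 T2"
        have o: "openin T1 (Bcut X l Btt)" "openin T2 (Bcut X l Bff)"
          using cuts_open[OF l] X_def by auto
        have "p l = (q1 (Bcut X l Btt), q2 (Bcut X l Bff))"
          using l_eq[OF l] pmk[OF o] X_def by metis
        also have "\<dots> = (x \<in> Bcut X l Btt, x \<in> Bcut X l Bff)"
          using A1(2) A2(2) o x open_meet_closure[OF o(1) x(1)] open_meet_closure[OF o(2)] X2 X_def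
          by auto
        also have "\<dots> = l x" using x X_def by (auto simp: Bcut_def tt_le ff_le prod_eq_iff)
        finally show "p l = l x" .
      qed
    next
      fix y assume y: "y \<in> topspace T1 \<and> (\<forall>l\<in>Btopology T1 T2. p l = l y)"
      have c1: "topspace T1 - W1 = T1 closure_of {y}"
      proof (rule char_closure)
        show "closedin T1 (topspace T1 - W1)" using A1(1) irreducible_closed_def by blast
        show "y \<in> topspace T1" using y by simp
        show "\<forall>U. openin T1 U \<longrightarrow> (U \<inter> (topspace T1 - W1) \<noteq> {}) = (y \<in> U)"
        proof (intro allI impI)
          fix U assume U: "openin T1 U"
          have "p (mk U {}) = mk U {} y" using y mk_in[OF assms U o0(2)] by auto
          then have "q1 U = (y \<in> U)" unfolding q1_def by (simp add: mk_def)
          then show "(U \<inter> (topspace T1 - W1) \<noteq> {}) = (y \<in> U)" using A1(2) U by blast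
        qed
      qed
      have c2: "topspace T2 - W2 = T2 closure_of {y}"
      proof (rule char_closure)
        show "closedin T2 (topspace T2 - W2)" using A2(1) irreducible_closed_def by blast
        show "y \<in> topspace T2" using y assms by simp
        show "\<forall>U. openin T2 U \<longrightarrow> (U \<inter> (topspace T2 - W2) \<noteq> {}) = (y \<in> U)"
        proof (intro allI impI)
          fix U assume U: "openin T2 U"
          have "p (mk {} U) = mk {} U y" using y mk_in[OF assms o0(1) U] by auto
          then have "q2 U = (y \<in> U)" unfolding q2_def by (simp add: mk_def)
          then show "(U \<inter> (topspace T2 - W2) \<noteq> {}) = (y \<in> U)" using A2(2) U by blast
        qed
      qed
      show "y = x" using xu y c1 c2 by blast
    qed
  qed
qed

end
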